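(* Let $S$ be a numerical semigroup with embedding dimension $\mathrm e(S)\le 3$. Then $S$ is cyclotomic if and only if $S$ is symmetric.
   Context: A numerical semigroup is a submonoid $S$ of $(\mathbb N,+)$ with $\mathbb N\setminus S$ finite; $\mathrm e(S)$ is the cardinality of its unique minimal generating set. Its Frobenius number $\mathrm F(S)$ is the largest integer not in $S$; $S$ is symmetric if $S\cup(\mathrm F(S)-S)=\mathbb Z$. The semigroup polynomial is $\mathrm P_S(x)=(1-x)\sum_{s\in S}x^s$, and $S$ is cyclotomic if this monic integer polynomial has all its complex roots in the closed unit disc. *)

theory Defs
  imports "HOL-Computational_Algebra.Computational_Algebra" "HOL-Analysis.Analysis"
begin

definition numerical_semigroup :: "nat set \<Rightarrow> bool" where
  "numerical_semigroup S \<longleftrightarrow> 0 \<in> S \<and> (\<forall>x\<in>S. \<forall>y\<in>S. x + y \<in> S) \<and> finite (UNIV - S)"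

inductive_set monoid_gen :: "nat set \<Rightarrow> nat set" for A :: "nat set" where
  zero: "0 \<in> monoid_gen A"
| gen: "a \<in> A \<Longrightarrow> a \<in> monoid_gen A"
| add: "x \<in> monoid_gen A \<Longrightarrow> y \<in> monoid_gen A \<Longrightarrow> x + y \<in> monoid_gen A"

definition minimal_generating_set :: "nat set \<Rightarrow> nat set" where
  "minimal_generating_set S =
     (THE A. monoid_gen A = S \<and> (\<forall>B. B \<subset> A \<longrightarrow> monoid_gen B \<noteq> S))"

definition embedding_dimension :: "nat set \<Rightarrow> nat" where
  "embedding_dimension S = card (minimal_generating_set S)"

definition frobenius :: "nat set \<Rightarrow> int" where
  "frobenius S = (if S = UNIV then -1 else int (Max (UNIV - S)))"

definition symmetric_sg :: "nat set \<Rightarrow> bool" where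
  "symmetric_sg S \<longleftrightarrow> int ` S \<union> (\<lambda>s. frobenius S - s) ` (int ` S) = (UNIV :: int set)"

definition semigroup_poly :: "nat set \<Rightarrow> int poly" where
  "semigroup_poly S = (THE p. fps_of_poly p = (1 - fps_X) * Abs_fps (\<lambda>n. if n \<in> S then 1 else 0))"

definition cyclotomic_sg :: "nat set \<Rightarrow> bool" where
  "cyclotomic_sg S \<longleftrightarrow>
     (\<forall>z::complex. poly (map_poly of_int (semigroup_poly S)) z = 0 \<longrightarrow> cmod z \<le> 1)"

end

theory Submission
  imports Defs "HOL-Number_Theory.Cong"
begin


definition ind :: "nat set \<Rightarrow> nat \<Rightarrow> int" where
  "ind S n = (if n \<in> S then 1 else 0)"

definition cS :: "nat set \<Rightarrow> nat \<Rightarrow> int" where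
  "cS S n = ind S n - (if n = 0 then 0 else ind S (n - 1))"

lemma cofinite_bound:
  assumes "numerical_semigroup S"
  shows "\<exists>N. \<forall>n\<ge>N. n \<in> S"
proof -
  have "finite (UNIV - S)" using assms unfolding numerical_semigroup_def by blast
  then obtain N where "\<forall>x\<in>UNIV - S. x < N" using finite_nat_set_iff_bounded by blast
  then show ?thesis by (metis DiffI UNIV_I leD)
qed

lemma sp_fps_coeff:
  assumes "numerical_semigroup S"
  shows "fps_of_poly (semigroup_poly S) = (1 - fps_X) * Abs_fps (\<lambda>n. if n \<in> S then 1 else 0)"
    and "coeff (semigroup_poly S) n = cS S n"
proof -
  obtain N where N: "\<forall>n\<ge>N. n \<in> S" using cofinite_bound[OF assms] by blast
  define p0 where "p0 = (\<Sum>k\<le>N+1. monom (cS S k) k)"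
  have cp0: "coeff p0 n = cS S n" for n
  proof -
    have "coeff p0 n = (\<Sum>k\<le>N+1. if n = k then cS S k else 0)"
      unfolding p0_def coeff_sum coeff_monom by (intro sum.cong) auto
    also have "\<dots> = (if n \<le> N + 1 then cS S n else 0)"
      using sum.delta'[of "{..N+1}" n "cS S"] by simp
    also have "\<dots> = cS S n"
    proof (cases "n \<le> N+1")
      case False
      then have "n \<in> S" "n - 1 \<in> S" using N by auto
      then show ?thesis using False by (simp add: cS_def ind_def)
    qed simp
    finally show ?thesis .
  qed
  have fpseq: "(1 - fps_X) * Abs_fps (\<lambda>n. if n \<in> S then 1 else 0) = Abs_fps (cS S)"
    by (rule fps_ext) (simp add: algebra_simps cS_def ind_def)
  have "fps_of_poly p0 = Abs_fps (cS S)"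
    by (rule fps_ext) (simp add: cp0)
  then have ex: "fps_of_poly p0 = (1 - fps_X) * Abs_fps (\<lambda>n. if n \<in> S then 1 else 0)"
    using fpseq by simp
  have "semigroup_poly S = p0"
    unfolding semigroup_poly_def
    by (rule the_equality) (metis ex fps_of_poly_eq_iff)+
  then show "fps_of_poly (semigroup_poly S) = (1 - fps_X) * Abs_fps (\<lambda>n. if n \<in> S then 1 else 0)"
    and "coeff (semigroup_poly S) n = cS S n" using ex cp0 by auto
qed



lemma mg_sub:
  assumes "A \<subseteq> S" "0 \<in> S" "\<forall>x\<in>S. \<forall>y\<in>S. x + y \<in> S"
  shows "monoid_gen A \<subseteq> S"
proof
  fix x assume "x \<in> monoid_gen A" then show "x \<in> S"
    by (induction rule: monoid_gen.induct) (use assms in auto)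
qed

lemma gen_sub: "A \<subseteq> monoid_gen A"
  by (auto intro: monoid_gen.gen)

lemma mg_mono_gen:
  assumes "A \<subseteq> monoid_gen B"
  shows "monoid_gen A \<subseteq> monoid_gen B"
proof
  fix x assume "x \<in> monoid_gen A" then show "x \<in> monoid_gen B"
    by (induction rule: monoid_gen.induct) (use assms in \<open>auto intro: monoid_gen.intros\<close>)
qed

definition atoms :: "nat set \<Rightarrow> nat set" where
  "atoms S = {x \<in> S. x \<noteq> 0 \<and> \<not>(\<exists>y\<in>S. \<exists>z\<in>S. y \<noteq> 0 \<and> z \<noteq> 0 \<and> x = y + z)}"

lemma atom_in:
  assumes "x \<in> monoid_gen B" "monoid_gen B \<subseteq> S" "x \<in> atoms S"
  shows "x \<in> B"
  using assms
proof (induction rule: monoid_gen.induct)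
  case zero then show ?case by (simp add: atoms_def)
next
  case (gen a) then show ?case by simp
next
  case (add y z)
  have yS: "y \<in> S" and zS: "z \<in> S" using add.prems add.hyps by auto
  show ?case
  proof (cases "y = 0")
    case True then show ?thesis using add by simp
  next
    case False
    show ?thesis
    proof (cases "z = 0")
      case True then show ?thesis using add by simp
    next
      case False2: False
      then show ?thesis using add.prems(2) yS zS False unfolding atoms_def by blast
    qed
  qed
qed

lemma atoms_gen:
  assumes ns: "numerical_semigroup S"
  shows "monoid_gen (atoms S) = S"
proof
  have cl: "0 \<in> S" "\<forall>x\<in>S. \<forall>y\<in>S. x + y \<in> S" using ns unfolding numerical_semigroup_def by auto
  show "monoid_gen (atoms S) \<subseteq> S"
    by (rule mg_sub) (use cl in \<open>auto simp: atoms_def\<close>)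
  show "S \<subseteq> monoid_gen (atoms S)"
  proof
    fix s assume "s \<in> S"
    then show "s \<in> monoid_gen (atoms S)"
    proof (induction s rule: less_induct)
      case (less s)
      show ?case
      proof (cases "s \<in> atoms S")
        case True then show ?thesis by (rule monoid_gen.gen)
      next
        case False
        show ?thesis
        proof (cases "s = 0")
          case True then show ?thesis by (simp add: monoid_gen.zero)
        next
          case False2: False
          with False less.prems obtain y z where "y \<in> S" "z \<in> S" "y \<noteq> 0" "z \<noteq> 0" "s = y + z"
            unfolding atoms_def by blast
          then show ?thesis using less.IH by (auto intro: monoid_gen.add)
        qed
      qed
    qed
  qed
qed

lemma below:
  assumes "x \<in> monoid_gen A" "x < a"
  shows "x \<in> monoid_gen (A - {a})"
  using assms
  by (induction rule: monoid_gen.induct) (auto intro: monoid_gen.intros)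

lemma mgs:
  assumes ns: "numerical_semigroup S"
  shows "minimal_generating_set S = atoms S"
  unfolding minimal_generating_set_def
proof (rule the_equality)
  show "monoid_gen (atoms S) = S \<and> (\<forall>B. B \<subset> atoms S \<longrightarrow> monoid_gen B \<noteq> S)"
  proof (intro conjI allI impI)
    show "monoid_gen (atoms S) = S" by (rule atoms_gen[OF ns])
    fix B assume B: "B \<subset> atoms S"
    show "monoid_gen B \<noteq> S"
    proof
      assume eq: "monoid_gen B = S"
      from B obtain x where x: "x \<in> atoms S" "x \<notin> B" by blast
      have "x \<in> monoid_gen B" using x eq by (simp add: atoms_def)
      then have "x \<in> B" using atom_in[of x B S] eq x by simp
      then show False using x by simp
    qed
  qed
next
  fix A assume A: "monoid_gen A = S \<and> (\<forall>B. B \<subset> A \<longrightarrow> monoid_gen B \<noteq> S)"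
  have AS: "A \<subseteq> S" using A gen_sub by blast
  show "A = atoms S"
  proof
    show "atoms S \<subseteq> A"
    proof
      fix x assume x: "x \<in> atoms S"
      then have "x \<in> monoid_gen A" using A by (simp add: atoms_def)
      then show "x \<in> A" using atom_in[of x A S] A x by simp
    qed
    show "A \<subseteq> atoms S"
    proof
      fix a assume aA: "a \<in> A"
      show "a \<in> atoms S"
      proof (rule ccontr)
        assume na: "a \<notin> atoms S"
        have "a \<in> monoid_gen (A - {a})"
        proof (cases "a = 0")
          case True then show ?thesis by (simp add: monoid_gen.zero)
        next
          case False
          with na aA AS obtain y z where yz: "y \<in> S" "z \<in> S" "y \<noteq> 0" "z \<noteq> 0" "a = y + z"
            unfolding atoms_def by blast
          have "y \<in> monoid_gen (A - {a})" using below[of y A a] yz A by auto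
          moreover have "z \<in> monoid_gen (A - {a})" using below[of z A a] yz A by auto
          ultimately show ?thesis using yz by (auto intro: monoid_gen.add)
        qed
        then have "A \<subseteq> monoid_gen (A - {a})" using gen_sub[of "A - {a}"] by blast
        then have "monoid_gen A \<subseteq> monoid_gen (A - {a})" by (rule mg_mono_gen)
        moreover have "monoid_gen (A - {a}) \<subseteq> monoid_gen A"
          by (rule mg_mono_gen) (use gen_sub[of A] in blast)
        ultimately have "monoid_gen (A - {a}) = S" using A by blast
        moreover have "A - {a} \<subset> A" using aA by blast
        ultimately show False using A by blast
      qed
    qed
  qed
qed

lemma atoms_finite:
  assumes ns: "numerical_semigroup S"
  shows "finite (atoms S)"
proof -
  obtain N0 where N0: "\<forall>n\<ge>N0. n \<in> S" using cofinite_bound[OF ns] by blast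
  define N where "N = max N0 1"
  have N: "\<forall>n\<ge>N. n \<in> S" "N \<ge> 1" using N0 unfolding N_def by auto
  have "atoms S \<subseteq> {..<2*N}"
  proof
    fix x assume x: "x \<in> atoms S"
    show "x \<in> {..<2*N}"
    proof (rule ccontr)
      assume "x \<notin> {..<2*N}"
      then have "x \<ge> 2*N" by simp
      then have "N \<in> S" "x - N \<in> S" "N \<noteq> 0" "x - N \<noteq> 0" "x = N + (x - N)" using N by auto
      then show False using x unfolding atoms_def by blast
    qed
  qed
  then show ?thesis using finite_subset by blast
qed

lemma mult_in_mg: "a \<in> A \<Longrightarrow> a * x \<in> monoid_gen A"
  by (induction x) (auto intro: monoid_gen.intros)

lemma mg3: "monoid_gen {a, b, c} = {n. \<exists>x y z. n = a*x + b*y + c*z}"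
proof
  show "monoid_gen {a, b, c} \<subseteq> {n. \<exists>x y z. n = a*x + b*y + c*z}"
  proof
    fix n assume "n \<in> monoid_gen {a, b, c}"
    then show "n \<in> {n. \<exists>x y z. n = a*x + b*y + c*z}"
    proof (induction rule: monoid_gen.induct)
      case zero then show ?case by (auto intro!: exI[of _ 0])
    next
      case (gen d)
      then have "d = a \<or> d = b \<or> d = c" by simp
      then show ?case
      proof (elim disjE)
        assume "d = a" then have "d = a*1 + b*0 + c*0" by simp then show ?thesis by blast
      next
        assume "d = b" then have "d = a*0 + b*1 + c*0" by simp then show ?thesis by blast
      next
        assume "d = c" then have "d = a*0 + b*0 + c*1" by simp then show ?thesis by blast
      qed
    next
      case (add u v)
      then obtain x y z x' y' z' where "u = a*x + b*y + c*z" "v = a*x' + b*y' + c*z'" by auto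
      then have "u + v = a*(x+x') + b*(y+y') + c*(z+z')" by (simp add: algebra_simps)
      then show ?case by blast
    qed
  qed
  show "{n. \<exists>x y z. n = a*x + b*y + c*z} \<subseteq> monoid_gen {a, b, c}"
    using mult_in_mg[of a "{a,b,c}"] mult_in_mg[of b "{a,b,c}"] mult_in_mg[of c "{a,b,c}"]
    by (auto intro!: monoid_gen.add)
qed

lemma card_le3:
  assumes "finite A" "A \<noteq> {}" "card A \<le> 3"
  shows "\<exists>a b c. A = {a, b, c}"
proof -
  have "card A \<noteq> 0" using assms by simp
  then have "card A = 1 \<or> card A = 2 \<or> card A = 3" using assms(3) by linarith
  then show ?thesis
  proof (elim disjE)
    assume "card A = 1" then obtain x where "A = {x}" by (rule card_1_singletonE)
    then show ?thesis by auto
  next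
    assume "card A = 2" then obtain x y where "A = {x, y}" by (auto simp: card_2_iff)
    then show ?thesis by auto
  next
    assume "card A = 3" then show ?thesis by (auto simp: card_3_iff)
  qed
qed

lemma structure3:
  assumes ns: "numerical_semigroup S" and e: "embedding_dimension S \<le> 3"
  shows "\<exists>a b c. a > 0 \<and> b > 0 \<and> c > 0 \<and> S = {n. \<exists>x y z. n = a*x + b*y + c*z}
     \<and> (\<forall>d. d dvd a \<and> d dvd b \<and> d dvd c \<longrightarrow> d = 1)"
proof -
  have fin: "finite (atoms S)" by (rule atoms_finite[OF ns])
  have cl: "0 \<in> S" "\<forall>x\<in>S. \<forall>y\<in>S. x + y \<in> S" using ns unfolding numerical_semigroup_def by auto
  obtain N where N: "\<forall>n\<ge>N. n \<in> S" using cofinite_bound[OF ns] by blast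
  have ne: "atoms S \<noteq> {}"
  proof
    assume "atoms S = {}"
    then have "monoid_gen {} = S" using atoms_gen[OF ns] by simp
    moreover have "monoid_gen {} \<subseteq> {0::nat}" by (rule mg_sub) auto
    ultimately have "S \<subseteq> {0}" by simp
    moreover have "N \<in> S" "N + 1 \<in> S" using N by auto
    ultimately show False by auto
  qed
  have "card (atoms S) \<le> 3" using e mgs[OF ns] by (simp add: embedding_dimension_def)
  then obtain a b c where abc: "atoms S = {a, b, c}" using card_le3 fin ne by blast
  have S: "S = {n. \<exists>x y z. n = a*x + b*y + c*z}" using atoms_gen[OF ns] abc mg3 by metis
  have pos: "a > 0" "b > 0" "c > 0" using abc unfolding atoms_def by auto
  have dv: "d = 1" if d: "d dvd a" "d dvd b" "d dvd c" for d
  proof -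
    have "\<forall>n\<in>S. d dvd n" using d S by auto
    then have "d dvd N" "d dvd (N+1)" using N by auto
    then have "d dvd (N+1) - N" by (rule dvd_diff_nat[rotated])
    then have "d dvd 1" by simp
    then show ?thesis by simp
  qed
  show ?thesis using pos S dv by blast
qed



definition apery :: "nat set \<Rightarrow> nat \<Rightarrow> nat \<Rightarrow> bool" where
  "apery S n w \<longleftrightarrow> w \<in> S \<and> \<not>(n \<le> w \<and> w - n \<in> S)"

lemma caseB:
  fixes n1 n2 n3 c1 c2 c3 M :: nat
  assumes pos: "n1 > 0" "n2 > 0" "n3 > 0"
    and S: "S = {n. \<exists>x y z. n = n1*x + n2*y + n3*z}"
    and M: "apery S n1 M" and maxM: "\<And>w. apery S n1 w \<Longrightarrow> w \<le> M \<and> M - w \<in> S"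
    and c2: "c2 \<ge> 1" "\<exists>x z. c2*n2 = n1*x + n3*z" "\<And>k x z. 1 \<le> k \<Longrightarrow> k < c2 \<Longrightarrow> k*n2 \<noteq> n1*x + n3*z"
    and c3: "c3 \<ge> 1" "\<exists>x y. c3*n3 = n1*x + n2*y" "\<And>k x y. 1 \<le> k \<Longrightarrow> k < c3 \<Longrightarrow> k*n3 \<noteq> n1*x + n2*y"
    and c1: "c1 \<ge> 1" "\<exists>y z. c1*n1 = n2*y + n3*z" "\<And>k y z. 1 \<le> k \<Longrightarrow> k < c1 \<Longrightarrow> k*n1 \<noteq> n2*y + n3*z"
    and B2: "\<And>x z. c2*n2 = n1*x + n3*z \<Longrightarrow> x > 0"
    and B3: "\<And>x y. c3*n3 = n1*x + n2*y \<Longrightarrow> x > 0"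
    and B1: "\<And>y z. c1*n1 = n2*y + n3*z \<Longrightarrow> y > 0 \<and> z > 0"
  shows False
proof -
  have inS: "n1*x + n2*y + n3*z \<in> S" for x y z using S by blast
  have notap: "\<not> apery S n1 (n1*x + n2*y + n3*z)" if xp: "x > 0" for x y z
  proof -
    obtain x' where x': "x = Suc x'" using xp by (cases x) auto
    have "n1*x + n2*y + n3*z - n1 = n1*x' + n2*y + n3*z" using x' by simp
    then show ?thesis unfolding apery_def using inS[of x' y z] x' by (simp add: add.assoc)
  qed
  have step1: "x = 0 \<and> y < c2 \<and> z < c3" if ap: "apery S n1 w" and w: "w = n1*x + n2*y + n3*z" for w x y z
  proof (intro conjI)
    show x0: "x = 0" using notap ap w by blast
    show "y < c2"
    proof (rule ccontr)
      assume "\<not> y < c2"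
      then obtain t where t: "y = c2 + t" using le_Suc_ex by (metis not_less)
      obtain x' z' where xz: "c2*n2 = n1*x' + n3*z'" using c2 by blast
      have "x' > 0" using B2 xz by blast
      have "w = n1*x' + n2*t + n3*(z + z')" using w x0 t xz by (simp add: algebra_simps)
      then show False using notap[OF \<open>x' > 0\<close>] ap by metis
    qed
    show "z < c3"
    proof (rule ccontr)
      assume "\<not> z < c3"
      then obtain t where t: "z = c3 + t" using le_Suc_ex by (metis not_less)
      obtain x' y' where xy: "c3*n3 = n1*x' + n2*y'" using c3 by blast
      have "x' > 0" using B3 xy by blast
      have "w = n1*x' + n2*(y + y') + n3*t" using w x0 t xy by (simp add: algebra_simps)
      then show False using notap[OF \<open>x' > 0\<close>] ap by metis
    qed
  qed
  obtain K2 where K2: "c2 = K2 + 1" using c2(1) by (metis add.commute le_add_diff_inverse)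
  obtain K3 where K3: "c3 = K3 + 1" using c3(1) by (metis add.commute le_add_diff_inverse)
  have ap2: "apery S n1 (K2*n2)"
    unfolding apery_def
  proof (intro conjI notI)
    show "K2*n2 \<in> S" using inS[of 0 "K2" 0] by (simp add: mult.commute)
    assume h: "n1 \<le> K2*n2 \<and> K2*n2 - n1 \<in> S"
    then obtain x y z where r: "K2*n2 - n1 = n1*x + n2*y + n3*z" using S by blast
    then have "K2*n2 = n1 + (n1*x + n2*y + n3*z)" using h by linarith
    then have r2: "K2*n2 = n1*(x+1) + n2*y + n3*z" by (simp add: algebra_simps)
    show False
    proof (cases "y < K2")
      case True
      then obtain k where k: "K2 = y + k" "k \<ge> 1" by (intro that[of "K2 - y"]) auto
      then have "k*n2 = n1*(x+1) + n3*z" using r2 by (simp add: algebra_simps)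
      moreover have "k < c2" using k K2 by linarith
      ultimately show False using c2(3)[OF k(2)] by blast
    next
      case False
      then have "K2*n2 \<le> n2*y" by (simp add: mult.commute)
      then show False using r2 pos by simp
    qed
  qed
  have ap3: "apery S n1 (K3*n3)"
    unfolding apery_def
  proof (intro conjI notI)
    show "K3*n3 \<in> S" using inS[of 0 0 "K3"] by (simp add: mult.commute)
    assume h: "n1 \<le> K3*n3 \<and> K3*n3 - n1 \<in> S"
    then obtain x y z where r: "K3*n3 - n1 = n1*x + n2*y + n3*z" using S by blast
    then have "K3*n3 = n1 + (n1*x + n2*y + n3*z)" using h by linarith
    then have r2: "K3*n3 = n1*(x+1) + n2*y + n3*z" by (simp add: algebra_simps)
    show False
    proof (cases "z < K3")
      case True
      then obtain k where k: "K3 = z + k" "k \<ge> 1" by (intro that[of "K3 - z"]) auto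
      then have "k*n3 = n1*(x+1) + n2*y" using r2 by (simp add: algebra_simps)
      moreover have "k < c3" using k K3 by linarith
      ultimately show False using c3(3)[OF k(2)] by blast
    next
      case False
      then have "K3*n3 \<le> n3*z" by (simp add: mult.commute)
      then show False using r2 pos by simp
    qed
  qed
  obtain z where z: "M = K2*n2 + n3*z" "z < c3"
  proof -
    have "K2*n2 \<le> M" "M - K2*n2 \<in> S" using maxM[OF ap2] by auto
    then obtain x y z where r: "M - K2*n2 = n1*x + n2*y + n3*z" using S by blast
    then have "M = n1*x + n2*y + n3*z + K2*n2" using \<open>K2*n2 \<le> M\<close> by linarith
    then have "M = n1*x + n2*(y + K2) + n3*z" by (simp add: algebra_simps)
    from step1[OF M this] have "x = 0" "y = 0" "z < c3" using K2 by auto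
    then have "M = K2*n2 + n3*z" using \<open>M = n1*x + n2*(y + K2) + n3*z\<close> by (simp add: mult.commute)
    then show ?thesis using that \<open>z < c3\<close> by blast
  qed
  obtain y' where y': "M = n2*y' + K3*n3" "y' < c2"
  proof -
    have "K3*n3 \<le> M" "M - K3*n3 \<in> S" using maxM[OF ap3] by auto
    then obtain x y z where r: "M - K3*n3 = n1*x + n2*y + n3*z" using S by blast
    then have "M = n1*x + n2*y + n3*z + K3*n3" using \<open>K3*n3 \<le> M\<close> by linarith
    then have "M = n1*x + n2*y + n3*(z + K3)" by (simp add: algebra_simps)
    from step1[OF M this] have "x = 0" "z = 0" "y < c2" using K3 by auto
    then have "M = n2*y + K3*n3" using \<open>M = n1*x + n2*y + n3*(z + K3)\<close> by (simp add: mult.commute)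
    then show ?thesis using that \<open>y < c2\<close> by blast
  qed
  obtain d where d: "K2 = y' + d" using y' K2 by (intro that[of "K2 - y'"]) auto
  obtain e where e: "K3 = z + e" using z K3 by (intro that[of "K3 - z"]) auto
  have de: "d*n2 = e*n3" using z(1) y'(1) d e by (simp add: algebra_simps)
  have d0: "d = 0"
  proof (rule ccontr)
    assume "d \<noteq> 0"
    then have "1 \<le> d" "d < c2" using d K2 by auto
    then show False using c2(3)[of d 0 e] de by simp
  qed
  then have e0: "e = 0" using de pos by simp
  have Mform: "M = K2*n2 + K3*n3" using z(1) e e0 by simp
  obtain y z where yz: "c1*n1 = n2*y + n3*z" using c1 by blast
  have yzpos: "y > 0" "z > 0" using B1 yz by auto
  have ylt: "y < c2"
  proof (rule ccontr)
    assume "\<not> y < c2"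
    then obtain t where t: "y = c2 + t" using le_Suc_ex by (metis not_less)
    obtain x' z' where xz: "c2*n2 = n1*x' + n3*z'" using c2 by blast
    have eq: "c1*n1 = n1*x' + n2*t + n3*(z' + z)" using yz t xz by (simp add: algebra_simps)
    show False
    proof (cases "x' < c1")
      case True
      then obtain k where k: "c1 = x' + k" "k \<ge> 1" by (intro that[of "c1 - x'"]) auto
      have "k*n1 = n2*t + n3*(z' + z)" using eq k by (simp add: algebra_simps)
      moreover have "k < c1" using k B2[OF xz] by linarith
      ultimately show False using c1(3)[OF k(2)] by blast
    next
      case False
      then have "c1*n1 \<le> n1*x'" by (simp add: mult.commute)
      then show False using eq yzpos pos by simp
    qed
  qed
  have zlt: "z < c3"
  proof (rule ccontr)
    assume "\<not> z < c3"
    then obtain t where t: "z = c3 + t" using le_Suc_ex by (metis not_less)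
    obtain x' y'' where xy: "c3*n3 = n1*x' + n2*y''" using c3 by blast
    have eq: "c1*n1 = n1*x' + n2*(y + y'') + n3*t" using yz t xy by (simp add: algebra_simps)
    show False
    proof (cases "x' < c1")
      case True
      then obtain k where k: "c1 = x' + k" "k \<ge> 1" by (intro that[of "c1 - x'"]) auto
      have "k*n1 = n2*(y + y'') + n3*t" using eq k by (simp add: algebra_simps)
      moreover have "k < c1" using k B3[OF xy] by linarith
      ultimately show False using c1(3)[OF k(2)] by blast
    next
      case False
      then have "c1*n1 \<le> n1*x'" by (simp add: mult.commute)
      then show False using eq yzpos pos by simp
    qed
  qed
  obtain p where p: "K2 = y + p" using ylt K2 by (intro that[of "K2 - y"]) auto
  obtain q where q: "K3 = z + q" using zlt K3 by (intro that[of "K3 - z"]) auto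
  have "M = n1*c1 + n2*p + n3*q" using Mform p q yz by (simp add: algebra_simps)
  then show False using notap[of c1 p q] M c1(1) by simp
qed



lemma twogen_sym:
  fixes m1 m2 x :: nat
  assumes cop: "coprime m1 m2" and pos: "m1 > 0" "m2 > 0"
    and nx: "\<not>(\<exists>a b. x = m1*a + m2*b)"
  shows "\<exists>a b. x + m1*(a+1) + m2*(b+1) = m1*m2"
proof -
  have "gcd m1 m2 dvd x" using cop by simp
  then obtain \<alpha> where "[m1*\<alpha> = x] (mod m2)" using cong_solve_dvd_nat by blast
  then have al: "[m1*(\<alpha> mod m2) = x] (mod m2)"
    by (metis cong_mod_left cong_scalar_left cong_trans mod_mod_trivial cong_def)
  define a0 where "a0 = \<alpha> mod m2"
  have a0lt: "a0 < m2" using pos a0_def by simp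
  have al0: "[m1*a0 = x] (mod m2)" using al a0_def by simp
  show ?thesis
  proof (cases "m1*a0 \<le> x")
    case True
    then obtain q where "x = q*m2 + m1*a0" using cong_le_nat[OF True] al0 cong_sym by blast
    then have "x = m1*a0 + m2*q" by (simp add: mult.commute)
    then show ?thesis using nx by blast
  next
    case False
    then have le: "x \<le> m1*a0" by simp
    obtain q where q: "m1*a0 = q*m2 + x" using cong_le_nat[OF le] al0 by blast
    have "q \<noteq> 0" using q False by auto
    then obtain b where b: "q = b + 1" by (metis add.commute le_add_diff_inverse less_one not_le)
    obtain a where a: "m2 = a0 + (a + 1)" using a0lt by (intro that[of "m2 - a0 - 1"]) auto
    have "m1*m2 = m1*a0 + m1*(a+1)" using a by (simp add: algebra_simps)
    also have "\<dots> = x + m1*(a+1) + m2*(b+1)" using q b by (simp add: algebra_simps)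
    finally show ?thesis by metis
  qed
qed

lemma gluing:
  fixes n1 n2 n3 g m1 m2 p q :: nat
  assumes pos: "n1 > 0" "n2 > 0" "n3 > 0"
    and g: "g = gcd n2 n3" and m1: "m1 = n2 div g" and m2: "m2 = n3 div g"
    and cop: "coprime n1 g" and n1: "n1 = m1*p + m2*q"
  shows "\<exists>k j i. k < g \<and> j < m2 \<and> n1*x + n2*y + n3*z = n1*k + n2*j + n3*i"
    and "k < g \<Longrightarrow> k' < g \<Longrightarrow> j < m2 \<Longrightarrow> j' < m2 \<Longrightarrow>
         n1*k + n2*j + n3*i = n1*k' + n2*j' + n3*i' \<Longrightarrow> k = k' \<and> j = j' \<and> i = i'"
proof -
  have gpos: "g > 0" using g pos by simp
  have n2g: "n2 = g*m1" using g m1 by simp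
  have n3g: "n3 = g*m2" using g m2 by simp
  have m2pos: "m2 > 0" using n3g pos by simp
  have m1pos: "m1 > 0" using n2g pos by simp
  have cm: "coprime m1 m2" using g m1 m2 div_gcd_coprime[of n2 n3] pos by simp
  show "\<exists>k j i. k < g \<and> j < m2 \<and> n1*x + n2*y + n3*z = n1*k + n2*j + n3*i"
  proof -
    define k where "k = x mod g"
    define X where "X = x div g"
    define Y where "Y = y + p*X"
    define j where "j = Y mod m2"
    define Y' where "Y' = Y div m2"
    have x: "x = k + g*X" unfolding k_def X_def by simp
    have Y: "Y = j + m2*Y'" unfolding j_def Y'_def by simp
    have "n1*x + n2*y + n3*z = n1*k + n2*j + n3*(z + q*X + m1*Y')"
    proof -
      have "n1*x + n2*y + n3*z = n1*k + n2*(y + p*X) + n3*(z + q*X)"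
        unfolding x n1 n2g n3g by (simp add: algebra_simps)
      also have "\<dots> = n1*k + n2*j + n3*(z + q*X + m1*Y')"
        unfolding Y_def[symmetric] Y n2g n3g by (simp add: algebra_simps)
      finally show ?thesis .
    qed
    moreover have "k < g" "j < m2" using gpos m2pos k_def j_def by auto
    ultimately show ?thesis by blast
  qed
  assume lt: "k < g" "k' < g" "j < m2" "j' < m2"
    and eq: "n1*k + n2*j + n3*i = n1*k' + n2*j' + n3*i'"
  have eq2: "n1*k + g*(m1*j + m2*i) = n1*k' + g*(m1*j' + m2*i')"
    using eq n2g n3g by (simp add: algebra_simps)
  then have "(n1*k) mod g = (n1*k') mod g"
    by (metis mod_mult_self2 mult.commute)
  then have "[n1*k = n1*k'] (mod g)" by (simp add: cong_def)
  then have "[k = k'] (mod g)" using cong_mult_lcancel_nat[OF cop] by simp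
  then have kk: "k = k'" using lt cong_less_modulus_unique_nat by blast
  then have eq3: "m1*j + m2*i = m1*j' + m2*i'" using eq2 gpos by simp
  then have "(m1*j) mod m2 = (m1*j') mod m2"
    by (metis mod_mult_self2 mult.commute)
  then have "[m1*j = m1*j'] (mod m2)" by (simp add: cong_def)
  then have "[j = j'] (mod m2)" using cong_mult_lcancel_nat[OF cm] by simp
  then have jj: "j = j'" using lt cong_less_modulus_unique_nat by blast
  then have "i = i'" using eq3 m2pos by simp
  then show "k = k' \<and> j = j' \<and> i = i'" using kk jj by simp
qed

lemma caseA:
  fixes n1 n2 n3 c l :: nat
  assumes pos: "n1 > 0" "n2 > 0" "n3 > 0"
    and gcd1: "\<And>d. d dvd n1 \<Longrightarrow> d dvd n2 \<Longrightarrow> d dvd n3 \<Longrightarrow> d = 1"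
    and cmin: "\<And>k x z. 1 \<le> k \<Longrightarrow> k < c \<Longrightarrow> k*n2 \<noteq> n1*x + n3*z"
    and rel: "c*n2 = n3*l" and c1: "c \<ge> 1"
  shows "coprime n1 (gcd n2 n3) \<and> (\<exists>p q. n1 = (n2 div gcd n2 n3)*p + (n3 div gcd n2 n3)*q)"
proof -
  define g where "g = gcd n2 n3"
  define m1 where "m1 = n2 div g"
  define m2 where "m2 = n3 div g"
  have gpos: "g > 0" using g_def pos by simp
  have n2g: "n2 = g*m1" using g_def m1_def by simp
  have n3g: "n3 = g*m2" using g_def m2_def by simp
  have m2pos: "m2 > 0" using n3g pos by simp
  have m1pos: "m1 > 0" using n2g pos by simp
  have cm: "coprime m1 m2" using g_def m1_def m2_def div_gcd_coprime[of n2 n3] pos by simp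
  have "c*m1 = l*m2" using rel n2g n3g gpos by (simp add: algebra_simps)
  then have "m2 dvd c*m1" by (metis dvd_triv_right)
  then have "m2 dvd c" using cm by (metis coprime_commute coprime_dvd_mult_left_iff)
  then have cge: "c \<ge> m2" using c1 by (simp add: dvd_imp_le)
  have cmin2: "k*n2 \<noteq> n1*x + n3*z" if "1 \<le> k" "k < m2" for k x z
    using cmin[of k x z] that cge by simp
  have cop: "coprime n1 g"
  proof -
    have "gcd n1 g dvd n1" "gcd n1 g dvd n2" "gcd n1 g dvd n3"
      using g_def by (auto intro: dvd_trans)
    then have "gcd n1 g = 1" using gcd1 by blast
    then show ?thesis by (simp add: coprime_iff_gcd_eq_1)
  qed
  have "\<exists>p q. n1 = m1*p + m2*q"
  proof (rule ccontr)
    assume "\<not> ?thesis"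
    then obtain a b where ab: "n1 + m1*(a+1) + m2*(b+1) = m1*m2"
      using twogen_sym[OF cm m1pos m2pos] by blast
    then have "m1*(a+1) \<le> m1*m2" by linarith
    then have "a + 1 \<le> m2" using nat_mult_le_cancel1[OF m1pos] by blast
    then obtain k where k: "m2 = (a+1) + k" by (metis le_add_diff_inverse)
    have "g*n1 + n2*(a+1) + n3*(b+1) = n2*m2"
      using ab n2g n3g by (metis (no_types, lifting) distrib_left mult.assoc mult.left_commute)
    then have keq: "k*n2 = n1*g + n3*(b+1)" using k by (simp add: algebra_simps)
    show False
    proof (cases "k = 0")
      case True then show False using keq pos gpos by simp
    next
      case False
      then have "1 \<le> k" "k < m2" using k by auto
      then show False using cmin2 keq by blast
    qed
  qed
  then show ?thesis using cop g_def m1_def m2_def by blast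
qed



lemma mpi_mult: "map_poly (of_int :: int \<Rightarrow> complex) (p * q) = map_poly of_int p * map_poly of_int q"
  by (intro poly_eqI) (simp add: coeff_map_poly coeff_mult)

lemma mpi_diff: "map_poly (of_int :: int \<Rightarrow> complex) (p - q) = map_poly of_int p - map_poly of_int q"
  by (intro poly_eqI) (simp add: coeff_map_poly)

lemma mpi_one: "map_poly (of_int :: int \<Rightarrow> complex) 1 = 1"
  by (intro poly_eqI) (simp add: coeff_map_poly)

lemma mpi_monom: "map_poly (of_int :: int \<Rightarrow> complex) (monom c n) = monom (of_int c) n"
  by (simp add: map_poly_monom)

lemma mpi_sum: "map_poly (of_int :: int \<Rightarrow> complex) (sum f A) = (\<Sum>x\<in>A. map_poly of_int (f x))"
  by (intro poly_eqI) (simp add: coeff_map_poly coeff_sum)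

lemma geo_nz:
  fixes u :: complex
  assumes "u = 1 \<or> cmod u < 1" "K > 0"
  shows "(\<Sum>k<K. u^k) \<noteq> 0"
proof (cases "u = 1")
  case True then show ?thesis using assms by simp
next
  case False
  then have u: "cmod u < 1" using assms by simp
  have "cmod (u^K) < 1" using u assms(2) by (simp add: norm_power power_less_one_iff)
  then have "u^K \<noteq> 1" by auto
  then show ?thesis using False by (simp add: sum_gp_strict)
qed

lemma noroots:
  fixes n1 n2 n3 g m1 m2 p q :: nat and w :: complex
  assumes ns: "numerical_semigroup S"
    and S: "S = {n. \<exists>x y z. n = n1*x + n2*y + n3*z}"
    and pos: "n1 > 0" "n2 > 0" "n3 > 0"
    and g: "g = gcd n2 n3" and m1: "m1 = n2 div g" and m2: "m2 = n3 div g"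
    and cop: "coprime n1 g" and n1: "n1 = m1*p + m2*q"
    and w: "cmod w < 1"
  shows "poly (map_poly of_int (semigroup_poly S)) w \<noteq> 0"
proof -
  note surj = gluing(1)[OF pos g m1 m2 cop n1]
  note inj = gluing(2)[OF pos g m1 m2 cop n1]
  have gpos: "g > 0" using g pos by simp
  have "n3 = g*m2" using g m2 by simp
  then have m2pos: "m2 > 0" using pos by (metis mult_0_right neq0_conv)
  have cl: "\<forall>x\<in>S. \<forall>y\<in>S. x + y \<in> S" using ns unfolding numerical_semigroup_def by auto
  define D where "D = {..<g} \<times> {..<m2}"
  define phi where "phi = (\<lambda>(k, j). n1*k + n2*j)"
  define B where "B = phi ` D"
  have finB: "finite B" unfolding B_def D_def by simp
  have injphi: "inj_on phi D"
    unfolding inj_on_def D_def phi_def using inj[where i=0 and i'=0] by auto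
  have BS: "B \<subseteq> S"
  proof
    fix n assume "n \<in> B"
    then obtain k j where "n = n1*k + n2*j + n3*0" unfolding B_def D_def phi_def by auto
    then show "n \<in> S" unfolding S by blast
  qed
  have n3S: "n3 \<in> S" unfolding S by (rule CollectI, rule exI[of _ 0], rule exI[of _ 0], rule exI[of _ 1]) simp
  have key: "(if n \<in> S then 1 else 0) - (if n3 \<le> n \<and> n - n3 \<in> S then 1 else 0)
           = (if n \<in> B then (1::int) else 0)" for n
  proof (cases "n \<in> B")
    case True
    then obtain k j where kj: "k < g" "j < m2" "n = n1*k + n2*j"
      unfolding B_def D_def phi_def by auto
    have "\<not>(n3 \<le> n \<and> n - n3 \<in> S)"
    proof
      assume h: "n3 \<le> n \<and> n - n3 \<in> S"
      then obtain x y z where "n - n3 = n1*x + n2*y + n3*z" using S by blast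
      then obtain k' j' i' where k': "k' < g" "j' < m2" "n - n3 = n1*k' + n2*j' + n3*i'"
        using surj by metis
      then have "n = n1*k' + n2*j' + n3*i' + n3" using h by linarith
      then have "n1*k + n2*j + n3*0 = n1*k' + n2*j' + n3*(i'+1)"
        using kj by (simp add: algebra_simps)
      then have "k = k' \<and> j = j' \<and> 0 = i'+1" by (rule inj[OF kj(1) k'(1) kj(2) k'(2)])
      then show False by simp
    qed
    then show ?thesis using True BS by auto
  next
    case False
    show ?thesis
    proof (cases "n \<in> S")
      case True
      then obtain x y z where "n = n1*x + n2*y + n3*z" using S by blast
      then obtain k j i where kji: "k < g" "j < m2" "n = n1*k + n2*j + n3*i"
        using surj by metis
      have "i \<noteq> 0"
      proof
        assume "i = 0"
        then have "n = phi (k, j)" using kji phi_def by simp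
        then show False using False kji unfolding B_def D_def by auto
      qed
      then obtain i' where i': "i = Suc i'" by (cases i) auto
      have "n3 \<le> n" using kji i' by simp
      moreover have "n - n3 = n1*k + n2*j + n3*i'" using kji i' by simp
      ultimately have "n3 \<le> n \<and> n - n3 \<in> S" using S by blast
      then show ?thesis using True False by simp
    next
      case nS: False
      have "\<not>(n3 \<le> n \<and> n - n3 \<in> S)"
      proof
        assume h: "n3 \<le> n \<and> n - n3 \<in> S"
        then have "(n - n3) + n3 \<in> S" using cl n3S by blast
        then show False using h nS by simp
      qed
      then show ?thesis using nS False by simp
    qed
  qed
  define A where "A = (\<Sum>b\<in>B. monom (1::int) b)"
  have cA: "coeff A n = (if n \<in> B then 1 else 0)" for n
    unfolding A_def coeff_sum coeff_monom using finB by (simp add: sum.delta)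
  have fps_key: "Abs_fps (\<lambda>n. if n \<in> S then 1 else 0) * (1 - fps_X ^ n3) = fps_of_poly A"
  proof (rule fps_ext)
    fix n
    have "(Abs_fps (\<lambda>n. if n \<in> S then 1 else 0) * (1 - fps_X ^ n3)) $ n
        = (if n \<in> S then 1 else 0) - (if n < n3 then 0 else (if n - n3 \<in> S then 1 else (0::int)))"
      by (simp add: right_diff_distrib fps_X_power_mult_right_nth)
    also have "\<dots> = (if n \<in> B then 1 else 0)" using key[of n] by (auto split: if_splits)
    finally show "(Abs_fps (\<lambda>n. if n \<in> S then 1 else 0) * (1 - fps_X ^ n3)) $ n = fps_of_poly A $ n"
      using cA by simp
  qed
  have ident: "semigroup_poly S * (1 - monom 1 n3) = (1 - monom 1 1) * A"
  proof -
    have "fps_of_poly (semigroup_poly S * (1 - monom 1 n3))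
        = (1 - fps_X) * (Abs_fps (\<lambda>n. if n \<in> S then 1 else 0) * (1 - fps_X ^ n3))"
      by (simp add: fps_of_poly_mult fps_of_poly_diff fps_of_poly_monom' sp_fps_coeff(1)[OF ns] mult.assoc)
    also have "\<dots> = fps_of_poly ((1 - monom 1 1) * A)"
      by (simp add: fps_key fps_of_poly_mult fps_of_poly_diff fps_of_poly_monom')
    finally show ?thesis by (simp add: fps_of_poly_eq_iff)
  qed
  have ev: "poly (map_poly of_int (semigroup_poly S)) w * (1 - w ^ n3)
        = (1 - w) * poly (map_poly of_int A) w"
  proof -
    have "map_poly (of_int :: int \<Rightarrow> complex) (semigroup_poly S * (1 - monom 1 n3))
          = map_poly of_int ((1 - monom 1 1) * A)" using ident by simp
    then have "map_poly of_int (semigroup_poly S) * (1 - monom 1 n3)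
          = (1 - monom 1 1) * (map_poly of_int A :: complex poly)"
      by (simp add: mpi_mult mpi_diff mpi_one mpi_monom)
    then have "poly (map_poly of_int (semigroup_poly S) * (1 - monom 1 n3)) w
          = poly ((1 - monom 1 1) * (map_poly of_int A :: complex poly)) w" by simp
    then show ?thesis by (simp add: poly_monom)
  qed
  have polyA: "poly (map_poly of_int A) w = (\<Sum>k<g. (w^n1)^k) * (\<Sum>j<m2. (w^n2)^j)"
  proof -
    have "poly (map_poly of_int A) w = (\<Sum>b\<in>B. w ^ b)"
      unfolding A_def by (simp add: mpi_sum mpi_monom poly_sum poly_monom)
    also have "\<dots> = (\<Sum>d\<in>D. w ^ phi d)"
      unfolding B_def by (rule sum.reindex[OF injphi, unfolded comp_def])
    also have "\<dots> = (\<Sum>k<g. \<Sum>j<m2. (w^n1)^k * (w^n2)^j)"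
      unfolding D_def phi_def sum.cartesian_product
      by (intro sum.cong refl) (auto simp: power_add power_mult)
    also have "\<dots> = (\<Sum>k<g. (w^n1)^k) * (\<Sum>j<m2. (w^n2)^j)"
      by (simp add: sum_product)
    finally show ?thesis .
  qed
  have wn: "w^n = 1 \<or> cmod (w^n) < 1" for n
    using w by (cases "n = 0") (auto simp: norm_power power_less_one_iff)
  have "poly (map_poly of_int A) w \<noteq> 0"
    unfolding polyA using geo_nz[OF wn gpos] geo_nz[OF wn m2pos] by simp
  moreover have "1 - w \<noteq> 0" using w by auto
  ultimately show ?thesis using ev by auto
qed



lemma frob_facts:
  assumes ns: "numerical_semigroup S" and nU: "S \<noteq> UNIV"
  defines "F \<equiv> Max (UNIV - S)"
  shows "F \<notin> S" "\<And>n. n > F \<Longrightarrow> n \<in> S" "frobenius S = int F" "0 \<in> S"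
proof -
  have fin: "finite (UNIV - S)" using ns unfolding numerical_semigroup_def by blast
  have ne: "UNIV - S \<noteq> {}" using nU by blast
  show "F \<notin> S" using Max_in[OF fin ne] F_def by blast
  show "n \<in> S" if "n > F" for n
  proof (rule ccontr)
    assume "n \<notin> S" then have "n \<le> F" using Max_ge[OF fin] F_def by blast
    then show False using that by simp
  qed
  show "frobenius S = int F" using nU F_def by (simp add: frobenius_def)
  show "0 \<in> S" using ns unfolding numerical_semigroup_def by blast
qed

lemma sym_pal:
  assumes ns: "numerical_semigroup S" and nU: "S \<noteq> UNIV"
  defines "F \<equiv> Max (UNIV - S)"
  shows "symmetric_sg S \<longleftrightarrow> (\<forall>m\<le>F+1. cS S m = cS S (F + 1 - m))"
proof -
  note ff = frob_facts[OF ns nU, folded F_def]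
  have cl: "\<forall>x\<in>S. \<forall>y\<in>S. x + y \<in> S" using ns unfolding numerical_semigroup_def by auto
  have indF1: "ind S (F+1) = 1" using ff by (simp add: ind_def)
  have indF: "ind S F = 0" using ff by (simp add: ind_def)
  have ind0: "ind S 0 = 1" using ff by (simp add: ind_def)
  show ?thesis
  proof
    assume sym: "symmetric_sg S"
    have h: "ind S m + ind S (F - m) = 1" if "m \<le> F" for m
    proof -
      have "\<not>(m \<in> S \<and> F - m \<in> S)"
      proof
        assume "m \<in> S \<and> F - m \<in> S"
        then have "m + (F - m) \<in> S" using cl by blast
        then show False using that ff by simp
      qed
      moreover have "m \<in> S \<or> F - m \<in> S"
      proof (rule ccontr)
        assume nn: "\<not>(m \<in> S \<or> F - m \<in> S)"
        have "int m \<in> int ` S \<union> (\<lambda>s. frobenius S - s) ` (int ` S)"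
          using sym unfolding symmetric_sg_def by simp
        moreover have "int m \<notin> int ` S" using nn by auto
        ultimately obtain s where s: "s \<in> S" "int m = int F - int s" using ff by auto
        then have "s = F - m" by simp
        then show False using s nn by simp
      qed
      ultimately show ?thesis by (auto simp: ind_def)
    qed
    show "\<forall>m\<le>F+1. cS S m = cS S (F + 1 - m)"
    proof (intro allI impI)
      fix m assume m: "m \<le> F + 1"
      consider "m = 0" | "m = F + 1" | "1 \<le> m \<and> m \<le> F" using m by linarith
      then show "cS S m = cS S (F + 1 - m)"
      proof cases
        case 1 then show ?thesis using indF1 indF ind0 by (simp add: cS_def)
      next
        case 2 then show ?thesis using indF1 indF ind0 by (simp add: cS_def)
      next
        case 3
        have a: "ind S m = 1 - ind S (F - m)" using h[of m] 3 by simp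
        have m1le: "m - 1 \<le> F" using 3 diff_le_self le_trans by blast
        have b: "ind S (m - 1) = 1 - ind S (F - (m - 1))" using h[OF m1le] by simp
        have c: "F - (m - 1) = F + 1 - m" "F + 1 - m - 1 = F - m" using 3 by auto
        show ?thesis using 3 a b c by (simp add: cS_def)
      qed
    qed
  next
    assume pal: "\<forall>m\<le>F+1. cS S m = cS S (F + 1 - m)"
    have h: "m \<le> F \<Longrightarrow> ind S m + ind S (F - m) = 1" for m
    proof (induction m)
      case 0 then show ?case using ind0 indF by simp
    next
      case (Suc m)
      have p: "cS S (Suc m) = cS S (F + 1 - Suc m)" using pal[rule_format, of "Suc m"] Suc.prems by linarith
      have e1: "F + 1 - Suc m = F - m" "F - m - 1 = F - Suc m" "F - m \<noteq> 0" using Suc.prems by auto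
      have eq: "ind S (Suc m) - ind S m = ind S (F - m) - ind S (F - Suc m)"
        using p e1 by (simp add: cS_def)
      have "m \<le> F" using Suc.prems by simp
      then have IH: "ind S m + ind S (F - m) = 1" by (rule Suc.IH)
      show ?case using IH eq by linarith
    qed
    show "symmetric_sg S"
      unfolding symmetric_sg_def
    proof (rule set_eqI, rule iffI)
      fix x :: int
      show "x \<in> int ` S \<union> (\<lambda>s. frobenius S - s) ` int ` S"
      proof (cases "x < 0")
        case True
        define s where "s = nat (int F - x)"
        have "s > F" using True s_def by simp
        then have "s \<in> S" using ff by blast
        moreover have "x = frobenius S - int s" using ff True s_def by simp
        ultimately have "x \<in> (\<lambda>s. frobenius S - s) ` int ` S" by (simp add: image_image)
        then show ?thesis by (rule UnI2)
      next
        case False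
        show ?thesis
        proof (cases "nat x \<in> S")
          case True
          have "x = int (nat x)" using False by simp
          then have "x \<in> int ` S" using True by (metis imageI)
          then show ?thesis by (rule UnI1)
        next
          case nS: False
          then have "nat x \<le> F" using ff by (meson not_le)
          then have "ind S (F - nat x) = 1" using h[of "nat x"] nS by (simp add: ind_def)
          then have "F - nat x \<in> S" by (simp add: ind_def split: if_splits)
          moreover have "x = frobenius S - int (F - nat x)" using ff False \<open>nat x \<le> F\<close> by simp
          ultimately have "x \<in> (\<lambda>s. frobenius S - s) ` int ` S" by (simp add: image_image)
          then show ?thesis by (rule UnI2)
        qed
      qed
    qed simp
  qed
qed



lemma prod_eq1_each:
  fixes f :: "nat \<Rightarrow> real"
  assumes "finite A" "\<And>x. x \<in> A \<Longrightarrow> 0 \<le> f x \<and> f x \<le> 1" "prod f A = 1" "a \<in> A"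
  shows "f a = 1"
proof (rule ccontr)
  assume "f a \<noteq> 1"
  then have lt: "f a < 1" using assms(2)[OF assms(4)] by simp
  have "prod f A = f a * prod f (A - {a})" using assms(1,4) by (simp add: prod.remove)
  also have "prod f (A - {a}) \<le> 1" by (rule prod_le_1) (use assms(2) in auto)
  then have "f a * prod f (A - {a}) \<le> f a" using assms(2)[OF assms(4)] by (simp add: mult_left_le)
  finally show False using lt assms(3) by simp
qed
lemma deg_sp:
  assumes ns: "numerical_semigroup S" and nU: "S \<noteq> UNIV"
  defines "F \<equiv> Max (UNIV - S)"
  shows "degree (semigroup_poly S) = F + 1" "coeff (semigroup_poly S) (F+1) = 1"
    "coeff (semigroup_poly S) 0 = 1"
proof -
  note ff = frob_facts[OF ns nU, folded F_def]
  have c: "coeff (semigroup_poly S) n = cS S n" for n by (rule sp_fps_coeff(2)[OF ns])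
  show c1: "coeff (semigroup_poly S) (F+1) = 1" using c ff by (simp add: cS_def ind_def)
  show "coeff (semigroup_poly S) 0 = 1" using c ff by (simp add: cS_def ind_def)
  have "coeff (semigroup_poly S) n = 0" if "n > F + 1" for n
  proof -
    have "n \<in> S" "n - 1 \<in> S" using that ff by auto
    then show ?thesis using c that by (simp add: cS_def ind_def)
  qed
  then have "degree (semigroup_poly S) \<le> F + 1" by (meson degree_le leI)
  moreover have "degree (semigroup_poly S) \<ge> F + 1" using c1 by (simp add: le_degree)
  ultimately show "degree (semigroup_poly S) = F + 1" by simp
qed

lemma pal_reflect:
  assumes ns: "numerical_semigroup S" and nU: "S \<noteq> UNIV"
  defines "F \<equiv> Max (UNIV - S)"
  defines "Pc \<equiv> map_poly (of_int :: int \<Rightarrow> complex) (semigroup_poly S)"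
  shows "(\<forall>m\<le>F+1. cS S m = cS S (F + 1 - m)) \<longleftrightarrow> reflect_poly Pc = Pc"
proof -
  note d = deg_sp[OF ns nU, folded F_def]
  have c: "coeff (semigroup_poly S) n = cS S n" for n by (rule sp_fps_coeff(2)[OF ns])
  have dPc: "degree Pc = F + 1" unfolding Pc_def using d by (subst map_poly_degree_eq) auto
  have cPc: "coeff Pc n = of_int (cS S n)" for n unfolding Pc_def by (simp add: coeff_map_poly c)
  have crf: "coeff (reflect_poly Pc) n = (if n > F + 1 then 0 else of_int (cS S (F + 1 - n)))" for n
    by (simp add: coeff_reflect_poly dPc cPc)
  show ?thesis
  proof
    assume pal: "\<forall>m\<le>F+1. cS S m = cS S (F + 1 - m)"
    show "reflect_poly Pc = Pc"
    proof (rule poly_eqI)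
      fix n
      show "coeff (reflect_poly Pc) n = coeff Pc n"
      proof (cases "n > F + 1")
        case True
        then have "coeff Pc n = 0" using dPc by (simp add: coeff_eq_0)
        then show ?thesis using True crf by simp
      next
        case False
        then have "cS S n = cS S (F + 1 - n)" using pal[rule_format, of n] by linarith
        then show ?thesis using False crf cPc by simp
      qed
    qed
  next
    assume r: "reflect_poly Pc = Pc"
    show "\<forall>m\<le>F+1. cS S m = cS S (F + 1 - m)"
    proof (intro allI impI)
      fix m assume "m \<le> F + 1"
      then have "coeff (reflect_poly Pc) m = of_int (cS S (F + 1 - m))" using crf by simp
      then have "(of_int (cS S m) :: complex) = of_int (cS S (F + 1 - m))" using r cPc by simp
      then show "cS S m = cS S (F + 1 - m)" by (simp only: of_int_eq_iff)
    qed
  qed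
qed

lemma cyc_reflect:
  assumes ns: "numerical_semigroup S" and nU: "S \<noteq> UNIV" and cyc: "cyclotomic_sg S"
  defines "Pc \<equiv> map_poly (of_int :: int \<Rightarrow> complex) (semigroup_poly S)"
  shows "reflect_poly Pc = Pc"
proof -
  define F where "F = Max (UNIV - S)"
  note d = deg_sp[OF ns nU, folded F_def]
  have dPc: "degree Pc = F + 1" unfolding Pc_def using d by (subst map_poly_degree_eq) auto
  have lc: "lead_coeff Pc = 1" unfolding Pc_def using d dPc Pc_def by (simp add: coeff_map_poly)
  have c0: "poly Pc 0 = 1" unfolding Pc_def using d by (simp add: poly_0_coeff_0 coeff_map_poly)
  obtain root where rt: "smult (lead_coeff Pc) (\<Prod>i<degree Pc. [:-root i, 1:]) = Pc"
    using complex_poly_decompose' by blast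
  define D where "D = F + 1"
  have Pc: "Pc = (\<Prod>i<D. [:-root i, 1:])" using rt lc dPc D_def by simp
  have pPc: "poly Pc x = (\<Prod>i<D. x - root i)" for x unfolding Pc by (simp add: poly_prod)
  have isroot: "poly Pc (root i) = 0" if "i < D" for i
    unfolding pPc using that by (intro prod_zero) auto
  have le1: "cmod (root i) \<le> 1" if "i < D" for i
    using cyc isroot[OF that] unfolding cyclotomic_sg_def Pc_def by blast
  have "(\<Prod>i<D. - root i) = 1" using c0 pPc[of 0] by simp
  then have "cmod (\<Prod>i<D. - root i) = 1" by simp
  moreover have "(\<Prod>i<D. cmod (- root i)) = cmod (\<Prod>i<D. - root i)" by (rule prod_norm)
  ultimately have "(\<Prod>i<D. cmod (root i)) = 1" by simp
  then have eq1: "cmod (root i) = 1" if "i < D" for i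
    using prod_eq1_each[of "{..<D}" "\<lambda>i. cmod (root i)" i] le1 that by simp
  have inv: "root i * cnj (root i) = 1" if "i < D" for i
    using complex_norm_square[of "root i"] eq1[OF that] by simp
  have realc: "\<And>n. coeff Pc n \<in> \<real>" unfolding Pc_def by (simp add: coeff_map_poly)
  have "poly (reflect_poly Pc) x = poly Pc x" for x
  proof (cases "x = 0")
    case True then show ?thesis using c0 lc by simp
  next
    case False
    have "poly (reflect_poly Pc) x = x ^ D * poly Pc (inverse x)"
      using poly_reflect_poly_nz[OF False] dPc D_def by simp
    also have "\<dots> = (\<Prod>i<D. x) * (\<Prod>i<D. inverse x - root i)"
      by (simp add: pPc)
    also have "\<dots> = (\<Prod>i<D. x * (inverse x - root i))"
      by (rule prod.distrib[symmetric])
    also have "\<dots> = (\<Prod>i<D. (- root i) * (x - cnj (root i)))"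
    proof (rule prod.cong[OF refl])
      fix i assume "i \<in> {..<D}"
      then have a: "root i * cnj (root i) = 1" using inv by simp
      have b: "x * inverse x = 1" using False by simp
      have "x * (inverse x - root i) = x * inverse x - x * root i" by (simp add: right_diff_distrib)
      also have "\<dots> = 1 - x * root i" using b by simp
      also have "\<dots> = root i * cnj (root i) - root i * x" using a by (simp add: mult.commute)
      also have "\<dots> = (- root i) * (x - cnj (root i))" by (simp add: right_diff_distrib)
      finally show "x * (inverse x - root i) = (- root i) * (x - cnj (root i))" .
    qed
    also have "\<dots> = (\<Prod>i<D. - root i) * (\<Prod>i<D. x - cnj (root i))"
      by (rule prod.distrib)
    also have "(\<Prod>i<D. - root i) = 1" using c0 pPc[of 0] by simp
    also have "(\<Prod>i<D. x - cnj (root i)) = cnj (poly Pc (cnj x))" by (simp add: pPc)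
    also have "\<dots> = poly Pc x" using poly_cnj_real[OF realc, of "cnj x"] by simp
    finally show ?thesis by simp
  qed
  then show ?thesis using poly_eq_poly_eq_iff by blast
qed

lemma reflect_cyc:
  assumes ns: "numerical_semigroup S" and nU: "S \<noteq> UNIV"
    and r: "reflect_poly (map_poly (of_int :: int \<Rightarrow> complex) (semigroup_poly S)) = map_poly of_int (semigroup_poly S)"
    and nr: "\<And>w. cmod w < 1 \<Longrightarrow> poly (map_poly (of_int :: int \<Rightarrow> complex) (semigroup_poly S)) w \<noteq> 0"
  shows "cyclotomic_sg S"
  unfolding cyclotomic_sg_def
proof (intro allI impI)
  define Pc where "Pc = map_poly (of_int :: int \<Rightarrow> complex) (semigroup_poly S)"
  fix z :: complex assume z: "poly (map_poly of_int (semigroup_poly S)) z = 0"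
  then have z': "poly Pc z = 0" using Pc_def by simp
  have "z \<noteq> 0"
  proof
    assume "z = 0"
    then have "poly Pc 0 = 0" using z' by simp
    moreover have "poly Pc 0 = 1" unfolding Pc_def using deg_sp(3)[OF ns nU]
      by (simp add: poly_0_coeff_0 coeff_map_poly)
    ultimately show False by simp
  qed
  show "cmod z \<le> 1"
  proof (rule ccontr)
    assume "\<not> cmod z \<le> 1"
    then have gt: "cmod z > 1" by simp
    have iz: "inverse z \<noteq> 0" using \<open>z \<noteq> 0\<close> by simp
    have "poly Pc (inverse z) = poly (reflect_poly Pc) (inverse z)" using r Pc_def by simp
    also have "\<dots> = (inverse z) ^ degree Pc * poly Pc z"
      using poly_reflect_poly_nz[OF iz] by simp
    also have "\<dots> = 0" using z' by simp
    finally have "poly Pc (inverse z) = 0" .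
    moreover have "cmod (inverse z) < 1" using gt by (simp add: norm_inverse inverse_less_1_iff)
    ultimately show False using nr Pc_def by blast
  qed
qed



definition cof :: "nat \<Rightarrow> nat \<Rightarrow> nat \<Rightarrow> nat" where
  "cof a b c = (LEAST k. k \<ge> 1 \<and> (\<exists>x z. k*a = b*x + c*z))"

lemma cof_props:
  assumes "b > 0"
  shows "cof a b c \<ge> 1" "\<exists>x z. cof a b c * a = b*x + c*z"
    "\<And>k x z. 1 \<le> k \<Longrightarrow> k < cof a b c \<Longrightarrow> k*a \<noteq> b*x + c*z"
proof -
  have ex: "\<exists>k. k \<ge> 1 \<and> (\<exists>x z. k*a = b*x + c*z)"
    using assms by (intro exI[of _ b] conjI exI[of _ a] exI[of _ 0]) auto
  have "cof a b c \<ge> 1 \<and> (\<exists>x z. cof a b c * a = b*x + c*z)"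
    unfolding cof_def by (rule LeastI_ex[OF ex])
  then show "cof a b c \<ge> 1" "\<exists>x z. cof a b c * a = b*x + c*z" by auto
  fix k x z assume "1 \<le> k" "k < cof a b c"
  then show "k*a \<noteq> b*x + c*z" unfolding cof_def using not_less_Least by blast
qed

lemma cof_swap: "cof a b c = cof a c b"
proof -
  have "(\<lambda>k. k \<ge> 1 \<and> (\<exists>x z. k*a = b*x + c*z)) = (\<lambda>k. k \<ge> 1 \<and> (\<exists>x z. k*a = c*x + b*z))"
    by (rule ext) (metis add.commute)
  then show ?thesis unfolding cof_def by simp
qed

lemma Sp12: "{n. \<exists>x y z. n = a*x + b*y + c*(z::nat)} = {n. \<exists>x y z. n = b*x + a*y + c*z}"
  by (rule Collect_cong) (metis add.commute)

lemma Sp23: "{n. \<exists>x y z. n = a*x + b*y + c*(z::nat)} = {n. \<exists>x y z. n = a*x + c*y + b*z}"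
  by (rule Collect_cong) (metis add.commute add.assoc)

lemma glueA:
  fixes a b c :: nat
  assumes ns: "numerical_semigroup S" and S: "S = {n. \<exists>x y z. n = a*x + b*y + c*z}"
    and pos: "a > 0" "b > 0" "c > 0"
    and gcd1: "\<And>d. d dvd a \<Longrightarrow> d dvd b \<Longrightarrow> d dvd c \<Longrightarrow> d = 1"
    and rel: "\<exists>l. cof b a c * b = c*l"
    and w: "cmod w < 1"
  shows "poly (map_poly of_int (semigroup_poly S)) w \<noteq> 0"
proof -
  obtain l where l: "cof b a c * b = c*l" using rel by blast
  note cp = cof_props[where a=b and b=a and c=c, OF pos(1)]
  have "coprime a (gcd b c) \<and> (\<exists>p q. a = (b div gcd b c)*p + (c div gcd b c)*q)"
    by (rule caseA[OF pos gcd1 cp(3) l cp(1)])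
  then obtain p q where cop: "coprime a (gcd b c)" and pq: "a = (b div gcd b c)*p + (c div gcd b c)*q"
    by blast
  show ?thesis by (rule noroots[OF ns S pos refl refl refl cop pq w])
qed

lemma sym_apery:
  assumes ns: "numerical_semigroup S" and nU: "S \<noteq> UNIV" and sym: "symmetric_sg S"
    and n1: "n1 > 0"
  defines "F \<equiv> Max (UNIV - S)"
  shows "apery S n1 (F + n1)" "\<And>w. apery S n1 w \<Longrightarrow> w \<le> F + n1 \<and> F + n1 - w \<in> S"
proof -
  note ff = frob_facts[OF ns nU, folded F_def]
  have symF: "int F - x \<in> int ` S" if xn: "x \<notin> int ` S" for x
  proof -
    have "x \<in> int ` S \<union> (\<lambda>s. frobenius S - s) ` (int ` S)"
      using sym unfolding symmetric_sg_def by simp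
    then obtain s where "s \<in> S" "x = int F - int s" using xn ff by auto
    then show ?thesis by simp
  qed
  have MS: "F + n1 \<in> S"
  proof (rule ccontr)
    assume "F + n1 \<notin> S"
    then have "int (F + n1) \<notin> int ` S" by (simp only: inj_image_mem_iff[OF inj_of_nat] not_False_eq_True)
    then have "int F - int (F + n1) \<in> int ` S" by (rule symF)
    then show False using n1 by auto
  qed
  show "apery S n1 (F + n1)" unfolding apery_def using MS ff by simp
  fix w assume ap: "apery S n1 w"
  have "int (F + n1) - int w \<in> int ` S"
  proof (rule ccontr)
    assume "int (F + n1) - int w \<notin> int ` S"
    then have "int F - (int (F + n1) - int w) \<in> int ` S" by (rule symF)
    then obtain s where s: "s \<in> S" "int F - (int (F + n1) - int w) = int s" by auto
    then have "n1 \<le> w" "w - n1 = s" by auto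
    then show False using ap s unfolding apery_def by simp
  qed
  then obtain s where s: "s \<in> S" "int (F + n1) - int w = int s" by auto
  then have "w \<le> F + n1" "F + n1 - w = s" by auto
  then show "w \<le> F + n1 \<and> F + n1 - w \<in> S" using s by simp
qed



theorem lemma5:
  fixes S :: "nat set"
  assumes "numerical_semigroup S"
    and "embedding_dimension S \<le> 3"
  shows "cyclotomic_sg S \<longleftrightarrow> symmetric_sg S"
proof (cases "S = UNIV")
  case True
  have "semigroup_poly S = 1"
  proof (rule poly_eqI)
    fix n show "coeff (semigroup_poly S) n = coeff 1 n"
      using sp_fps_coeff(2)[OF assms(1), of n] True by (simp add: cS_def ind_def)
  qed
  then have cyc: "cyclotomic_sg S" unfolding cyclotomic_sg_def by simp
  have "symmetric_sg S"
    unfolding symmetric_sg_def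
  proof (rule set_eqI, rule iffI)
    fix x :: int
    show "x \<in> int ` S \<union> (\<lambda>s. frobenius S - s) ` int ` S"
    proof (cases "x \<ge> 0")
      case True
      then have "x = int (nat x)" by simp
      then have "x \<in> int ` S" using \<open>S = UNIV\<close> by (metis UNIV_I imageI)
      then show ?thesis by (rule UnI1)
    next
      case False
      have fr: "frobenius S = -1" using \<open>S = UNIV\<close> by (simp add: frobenius_def)
      have "x = frobenius S - int (nat (-1 - x))" using False fr by simp
      moreover have "int (nat (-1 - x)) \<in> int ` S" using \<open>S = UNIV\<close> by (metis UNIV_I imageI)
      ultimately have "x \<in> (\<lambda>s. frobenius S - s) ` int ` S" by (metis imageI)
      then show ?thesis by (rule UnI2)
    qed
  qed simp
  then show ?thesis using cyc by simp
next
  case nU: False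
  note ns = assms(1)
  define Pc where "Pc = map_poly (of_int :: int \<Rightarrow> complex) (semigroup_poly S)"
  have eqv: "symmetric_sg S \<longleftrightarrow> reflect_poly Pc = Pc"
    using sym_pal[OF ns nU] pal_reflect[OF ns nU] Pc_def by simp
  show ?thesis
  proof
    assume "cyclotomic_sg S"
    then have "reflect_poly Pc = Pc" using cyc_reflect[OF ns nU] Pc_def by simp
    then show "symmetric_sg S" using eqv by simp
  next
    assume sym: "symmetric_sg S"
    then have r: "reflect_poly Pc = Pc" using eqv by simp
    obtain n1 n2 n3 where pos: "n1 > 0" "n2 > 0" "n3 > 0"
      and S: "S = {n. \<exists>x y z. n = n1*x + n2*y + n3*z}"
      and g1: "\<And>d. d dvd n1 \<Longrightarrow> d dvd n2 \<Longrightarrow> d dvd n3 \<Longrightarrow> d = 1"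
      using structure3[OF ns assms(2)] by blast
    have nr: "poly Pc w \<noteq> 0" if w: "cmod w < 1" for w
    proof -
      consider (A1) "\<exists>z. cof n2 n1 n3 * n2 = n3*z"
        | (A2) "\<exists>y. cof n3 n1 n2 * n3 = n2*y"
        | (A3) "\<exists>z. cof n1 n2 n3 * n1 = n3*z"
        | (A4) "\<exists>y. cof n1 n2 n3 * n1 = n2*y"
        | (B) "\<not>(\<exists>z. cof n2 n1 n3 * n2 = n3*z)" "\<not>(\<exists>y. cof n3 n1 n2 * n3 = n2*y)"
              "\<not>(\<exists>z. cof n1 n2 n3 * n1 = n3*z)" "\<not>(\<exists>y. cof n1 n2 n3 * n1 = n2*y)"
        by blast
      then show ?thesis
      proof cases
        case A1
        show ?thesis unfolding Pc_def
          by (rule glueA[OF ns S pos g1 A1 w])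
      next
        case A2
        have S': "S = {n. \<exists>x y z. n = n1*x + n3*y + n2*z}" using S Sp23 by metis
        show ?thesis unfolding Pc_def
          by (rule glueA[OF ns S' pos(1) pos(3) pos(2) _ A2 w]) (use g1 in blast)
      next
        case A3
        have S': "S = {n. \<exists>x y z. n = n2*x + n1*y + n3*z}" using S Sp12 by metis
        show ?thesis unfolding Pc_def
          by (rule glueA[OF ns S' pos(2) pos(1) pos(3) _ A3 w]) (use g1 in blast)
      next
        case A4
        have S': "S = {n. \<exists>x y z. n = n3*x + n1*y + n2*z}"
          using S Sp12[of n1 n3 n2] Sp23[of n1 n2 n3] by metis
        have A4': "\<exists>y. cof n1 n3 n2 * n1 = n2*y" using A4 cof_swap by metis
        show ?thesis unfolding Pc_def
          by (rule glueA[OF ns S' pos(3) pos(1) pos(2) _ A4' w]) (use g1 in blast)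
      next
        case B
        define F where "F = Max (UNIV - S)"
        note ap = sym_apery[OF ns nU sym pos(1), folded F_def]
        note c2 = cof_props[where a=n2 and b=n1 and c=n3, OF pos(1)]
        note c3 = cof_props[where a=n3 and b=n1 and c=n2, OF pos(1)]
        note c1 = cof_props[where a=n1 and b=n2 and c=n3, OF pos(2)]
        have B2: "x > 0" if "cof n2 n1 n3 * n2 = n1*x + n3*z" for x z
          using that B(1) by (cases "x = 0") auto
        have B3: "x > 0" if "cof n3 n1 n2 * n3 = n1*x + n2*y" for x y
          using that B(2) by (cases "x = 0") auto
        have B1: "y > 0 \<and> z > 0" if "cof n1 n2 n3 * n1 = n2*y + n3*z" for y z
          using that B(3) B(4) by (cases "y = 0"; cases "z = 0") auto
        have False
          apply (rule caseB[of n1 n2 n3 S "F + n1" "cof n2 n1 n3" "cof n3 n1 n2" "cof n1 n2 n3", OF pos S])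
          apply (fact ap(1))
          apply (fact ap(2))
          apply (fact c2(1))
          apply (fact c2(2))
          apply (fact c2(3))
          apply (fact c3(1))
          apply (fact c3(2))
          apply (fact c3(3))
          apply (fact c1(1))
          apply (fact c1(2))
          apply (fact c1(3))
          apply (fact B2)
          apply (fact B3)
          apply (fact B1)
          done
        then show ?thesis by simp
      qed
    qed
    show "cyclotomic_sg S"
      by (rule reflect_cyc[OF ns nU]) (use r nr Pc_def in auto)
  qed
qed

end
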